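(* Let $m\ge1$, $\vec\mu=(\mu_1,\dots,\mu_m)\in\mathbb{R}_{>0}^m$, $\vec\sigma=(\sigma_1,\dots,\sigma_m)\in\mathbb{R}_{\ge0}^m$, $r_j=\sigma_j/\mu_j$ and $r_{\max}=\max_j r_j$. (i) Let $A$ be the mechanism that sells each item $j$ separately, posting for item $j$ an independent random price drawn from the log-lottery $P^{\log}_{\mu_j,\sigma_j}$. Then $\mathrm{OPT}(F)/\mathrm{REV}(A;F)\le\rho(r_{\max})$ for every $F\in\mathbb{F}_{\vec\mu,\vec\sigma}$; in particular $\mathrm{APX}(\vec\mu,\vec\sigma)\le\rho(r_{\max})$. (ii) Let $\bar\mu=\sum_j\mu_j$, $\bar\sigma=\sqrt{\sum_j\sigma_j^2}$, $\bar r=\bar\sigma/\bar\mu$, and let $B$ be the mechanism that offers the bundle of all $m$ items at a single random price drawn from $P^{\log}_{\bar\mu,\bar\sigma}$. Then $\mathrm{OPT}(F)/\mathrm{REV}(B;F)\le\rho(\bar r)$ for every $F\in\mathbb{F}_{\vec\mu,\vec\sigma}$ that is a product distribution (i.e. the item values are independent).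
   Context: One buyer with additive valuation for $m$ items; the value vector $\vec v=(v_1,\dots,v_m)\in\mathbb{R}_{\ge0}^m$ is drawn from a joint distribution $F$. $\mathbb{F}_{\vec\mu,\vec\sigma}$ is the class of all joint distributions on $\mathbb{R}^m_{\ge0}$ whose $j$-th marginal has mean $\mu_j$ and standard deviation at most $\sigma_j$, for each $j$ (no independence assumed). A mechanism is a pair $(x,\pi)$ with $x:\mathbb{R}^m_{\ge0}\to[0,1]^m$ and $\pi:\mathbb{R}^m_{\ge0}\to\mathbb{R}_{\ge0}$; it is truthful if $x(\vec v)\cdot\vec v-\pi(\vec v)\ge x(\vec w)\cdot\vec v-\pi(\vec w)$ and $x(\vec v)\cdot\vec v-\pi(\vec v)\ge0$ for all $\vec v,\vec w$. $\mathrm{REV}(A;F)=\mathbb{E}_{\vec v\sim F}[\pi(\vec v)]$, $\mathrm{OPT}(F)=\sup$ of $\mathrm{REV}$ over truthful mechanisms, and $\mathrm{APX}(\vec\mu,\vec\sigma)=\inf_A\sup_{F\in\mathbb{F}_{\vec\mu,\vec\sigma}}\mathrm{OPT}(F)/\mathrm{REV}(A;F)$ over truthful $A$ (zero denominators give $+\infty$). A posted (random) price mechanism sells an item or bundle to the buyer iff the buyer's value for it is at least the drawn price. For $\mu>0,\sigma\ge0$, the log-lottery $P^{\log}_{\mu,\sigma}$ is the random price on $[\pi_1,\pi_2]$ with cdf $x\mapsto\frac{\pi_2\ln(x/\pi_1)-(x-\pi_1)}{\pi_2\ln(\pi_2/\pi_1)-(\pi_2-\pi_1)}$, where $\pi_1,\pi_2$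 are the unique solutions of $\pi_1(1+\ln(\pi_2/\pi_1))=\mu$, $\pi_1(2\pi_2-\pi_1)=\mu^2+\sigma^2$ (for $\sigma=0$ it is the deterministic price $\mu$). For $r\ge0$, $\rho(r)$ is the unique positive solution $\rho$ of $\frac{1}{\rho^2}(2e^{\rho-1}-1)=r^2+1$. *)

theory Defs
  imports "HOL-Probability.Probability"
begin

text \<open>Items are indexed by a finite type 'm (so m = CARD('m) \<ge> 1); value vectors are real ^ 'm.\<close>

type_synonym 'm mechanism = "(real ^ 'm \<Rightarrow> real ^ 'm) \<times> (real ^ 'm \<Rightarrow> real)"

definition nonneg_vecs :: "(real ^ 'm::finite) set" where
  "nonneg_vecs = {v. \<forall>j. 0 \<le> v $ j}"

definition truthful :: "('m::finite) mechanism \<Rightarrow> bool" where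
  "truthful M \<longleftrightarrow>
     (\<forall>v\<in>nonneg_vecs. (\<forall>j. 0 \<le> fst M v $ j \<and> fst M v $ j \<le> 1) \<and> 0 \<le> snd M v) \<and>
     (\<forall>v\<in>nonneg_vecs. \<forall>w\<in>nonneg_vecs.
        fst M v \<bullet> v - snd M v \<ge> fst M w \<bullet> v - snd M w) \<and>
     (\<forall>v\<in>nonneg_vecs. fst M v \<bullet> v - snd M v \<ge> 0)"

definition admissible_mech :: "('m::finite) mechanism \<Rightarrow> bool" where
  "admissible_mech M \<longleftrightarrow> truthful M \<and> snd M \<in> borel_measurable borel"

definition REV :: "('m::finite) mechanism \<Rightarrow> (real ^ 'm) measure \<Rightarrow> ennreal" where
  "REV M F = (\<integral>\<^sup>+ v. ennreal (snd M v) \<partial>F)"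

definition OPT :: "(real ^ 'm::finite) measure \<Rightarrow> ennreal" where
  "OPT F = (SUP M \<in> {M. admissible_mech M}. REV M F)"

definition dist_class :: "real ^ 'm::finite \<Rightarrow> real ^ 'm \<Rightarrow> (real ^ 'm) measure set" where
  "dist_class \<mu> \<sigma> = {F. prob_space F \<and> sets F = sets borel \<and>
      (AE v in F. v \<in> nonneg_vecs) \<and>
      (\<forall>j. integrable F (\<lambda>v. v $ j) \<and> integrable F (\<lambda>v. (v $ j)\<^sup>2) \<and>
           prob_space.expectation F (\<lambda>v. v $ j) = \<mu> $ j \<and>
           sqrt (prob_space.variance F (\<lambda>v. v $ j)) \<le> \<sigma> $ j)}"

definition ratio :: "ennreal \<Rightarrow> ennreal \<Rightarrow> ennreal" where
  "ratio a b = (if b = 0 then \<infinity> else a / b)"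

definition APX :: "real ^ 'm::finite \<Rightarrow> real ^ 'm \<Rightarrow> ennreal" where
  "APX \<mu> \<sigma> = (INF M \<in> {M :: 'm mechanism. admissible_mech M}.
                  SUP F \<in> dist_class \<mu> \<sigma>. ratio (OPT F) (REV M F))"

definition rho :: "real \<Rightarrow> real" where
  "rho r = (THE \<rho>. 0 < \<rho> \<and> (2 * exp (\<rho> - 1) - 1) / \<rho>\<^sup>2 = r\<^sup>2 + 1)"

definition loglottery_ends :: "real \<Rightarrow> real \<Rightarrow> real \<times> real" where
  "loglottery_ends \<mu> \<sigma> = (THE (p1, p2). 0 < p1 \<and> 0 < p2 \<and>
       p1 * (1 + ln (p2 / p1)) = \<mu> \<and> p1 * (2 * p2 - p1) = \<mu>\<^sup>2 + \<sigma>\<^sup>2)"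

definition loglottery_cdf :: "real \<Rightarrow> real \<Rightarrow> real \<Rightarrow> real" where
  "loglottery_cdf \<mu> \<sigma> x = (let (p1, p2) = loglottery_ends \<mu> \<sigma> in
      if x < p1 then 0 else if p2 < x then 1 else
      (p2 * ln (x / p1) - (x - p1)) / (p2 * ln (p2 / p1) - (p2 - p1)))"

definition loglottery :: "real \<Rightarrow> real \<Rightarrow> real measure" where
  "loglottery \<mu> \<sigma> = (if \<sigma> = 0 then return borel \<mu> else interval_measure (loglottery_cdf \<mu> \<sigma>))"

text \<open>Random posted price P for a good of value t: sold iff t >= price.
  Probability of sale and expected payment.\<close>
definition sale_prob :: "real measure \<Rightarrow> real \<Rightarrow> real" where
  "sale_prob P t = measure P {..t}"

definition exp_payment :: "real measure \<Rightarrow> real \<Rightarrow> real" where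
  "exp_payment P t = (\<integral>p. indicator {..t} p * p \<partial>P)"

definition separate_loglottery :: "real ^ 'm::finite \<Rightarrow> real ^ 'm \<Rightarrow> 'm mechanism" where
  "separate_loglottery \<mu> \<sigma> =
     ((\<lambda>v. \<chi> j. sale_prob (loglottery (\<mu> $ j) (\<sigma> $ j)) (v $ j)),
      (\<lambda>v. \<Sum>j\<in>UNIV. exp_payment (loglottery (\<mu> $ j) (\<sigma> $ j)) (v $ j)))"

definition bundle_loglottery :: "real \<Rightarrow> real \<Rightarrow> ('m::finite) mechanism" where
  "bundle_loglottery m s =
     ((\<lambda>v. \<chi> j. sale_prob (loglottery m s) (\<Sum>i\<in>UNIV. v $ i)),
      (\<lambda>v. exp_payment (loglottery m s) (\<Sum>i\<in>UNIV. v $ i)))"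

end

theory Submission
  imports Defs
begin


definition Phi :: "real \<Rightarrow> real" where "Phi x = (2 * exp (x - 1) - 1) / x\<^sup>2"

lemma exp_strict: "x \<noteq> 0 \<Longrightarrow> 1 + x < exp (x::real)"
proof -
  assume "x \<noteq> 0"
  show ?thesis
  proof (cases "x < -2")
    case True then show ?thesis by (smt (verit) exp_gt_zero)
  next
    case False
    have "exp x = exp (x/2)^2" by (simp add: power2_eq_square flip: exp_add)
    also have "\<dots> \<ge> (1 + x/2)^2" using False by (intro power_mono) auto
    finally have "exp x \<ge> 1 + x + x^2/4" by (simp add: power2_eq_square algebra_simps)
    moreover have "x^2 > 0" using \<open>x \<noteq> 0\<close> by simp
    ultimately show ?thesis by linarith
  qed
qed

lemma Phi_lt1: assumes "0 < x" "x < 1" shows "Phi x < 1"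
proof -
  have "(\<lambda>y. y^2 + 1 - 2 * exp (y - 1)) x > (\<lambda>y. y^2 + 1 - 2 * exp (y - 1)) 1"
  proof (rule DERIV_neg_imp_decreasing_open[OF assms(2)])
    show "continuous_on {x..1} (\<lambda>y. y^2 + 1 - 2 * exp (y - 1))" by (intro continuous_intros)
    fix y assume y: "x < y" "y < 1"
    show "\<exists>d. DERIV (\<lambda>y. y^2 + 1 - 2 * exp (y - 1)) y :> d \<and> d < 0"
    proof (intro exI conjI)
      show "DERIV (\<lambda>y. y^2 + 1 - 2 * exp (y - 1)) y :> 2 * y - 2 * exp (y - 1)"
        by (auto intro!: derivative_eq_intros)
      show "2 * y - 2 * exp (y - 1) < 0"
      proof (cases "y = 1")
        case True then show ?thesis using y assms by simp
      next
        case False then have "1 + (y - 1) < exp (y - 1)" by (intro exp_strict) auto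
        then show ?thesis by simp
      qed
    qed
  qed
  then have "2 * exp (x - 1) - 1 < x^2" by simp
  then show ?thesis unfolding Phi_def using assms by (simp add: divide_less_eq)
qed

lemma Phi_1: "Phi 1 = 1" by (simp add: Phi_def)

lemma Phi_strict_mono: assumes "1 \<le> a" "a < b" shows "Phi a < Phi b"
proof (rule DERIV_pos_imp_increasing_open[OF assms(2)])
  show "continuous_on {a..b} Phi" unfolding Phi_def using assms by (intro continuous_intros) auto
  fix x assume x: "a < x" "x < b"
  then have x1: "1 < x" using assms by simp
  have k: "exp (x - 1) * (x - 2) + 1 > 0" if "1 < x" for x :: real
  proof -
    have "(\<lambda>y. exp (y - 1) * (y - 2) + 1) 1 < (\<lambda>y. exp (y - 1) * (y - 2) + 1) x"
    proof (rule DERIV_pos_imp_increasing_open[OF that])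
      show "continuous_on {1..x} (\<lambda>y. exp (y - 1) * (y - 2) + 1)" by (intro continuous_intros)
      fix y assume y: "1 < y" "y < x"
      show "\<exists>d. DERIV (\<lambda>y. exp (y - 1) * (y - 2) + 1) y :> d \<and> d > 0"
          by (rule exI[of _ "exp (y - 1) * (y - 1)"]) (use y in \<open>auto intro!: derivative_eq_intros simp: algebra_simps\<close>)
    qed
    then show ?thesis by simp
  qed
  have "DERIV Phi x :> 2 * (exp (x - 1) * (x - 2) + 1) / x^3"
    unfolding Phi_def using x1
    by (auto intro!: derivative_eq_intros simp: field_simps power2_eq_square power3_eq_cube)
  moreover have "2 * (exp (x - 1) * (x - 2) + 1) / x^3 > 0" using k[OF x1] x1 by simp
  ultimately show "\<exists>d. DERIV Phi x :> d \<and> d > 0" by blast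
qed

lemma Phi_big: assumes "1 \<le> y" shows "\<exists>b\<ge>1. y \<le> Phi b"
proof -
  define b where "b = 14 * (y + 1)"
  have b1: "b \<ge> 1" using assms by (simp add: b_def)
  have "exp (b - 1) = exp ((b - 1)/3)^3" by (simp flip: exp_of_nat_mult)
  also have "\<dots> \<ge> (1 + (b - 1)/3)^3" using b1 by (intro power_mono) auto
  finally have e: "exp (b - 1) \<ge> ((b + 2)/3)^3" by (simp add: field_simps)
  have "((b + 2)/3)^3 \<ge> (b/3)^3" using b1 by (intro power_mono) auto
  with e have e2: "2 * exp (b - 1) - 1 \<ge> 2 * b^3/27 - 1" by (simp add: power_divide)
  have "2 * b^3/27 = b^2 * (2 * b / 27)" by (simp add: power2_eq_square power3_eq_cube)
  also have "2 * b / 27 \<ge> y + 1" using assms by (simp add: b_def)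
  then have "b^2 * (2 * b / 27) \<ge> b^2 * (y + 1)" by (intro mult_left_mono) auto
  finally have "2 * b^3/27 \<ge> b^2 * y + b^2" by (simp add: algebra_simps)
  moreover have "b^2 \<ge> 1" using b1 by (simp add: one_le_power)
  ultimately have "2 * exp (b - 1) - 1 \<ge> y * b^2" using e2 by (simp add: algebra_simps)
  then have "y \<le> Phi b" unfolding Phi_def using b1 by (simp add: le_divide_eq)
  with b1 show ?thesis by blast
qed

lemma Phi_exists: assumes "1 \<le> y" shows "\<exists>x\<ge>1. Phi x = y"
proof -
  obtain b where b: "b \<ge> 1" "y \<le> Phi b" using Phi_big[OF assms] by blast
  have "continuous_on {1..b} Phi" unfolding Phi_def by (intro continuous_intros) auto
  then obtain x where "1 \<le> x" "x \<le> b" "Phi x = y"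
    using IVT'[of Phi 1 y b] b assms Phi_1 by auto
  then show ?thesis by blast
qed

lemma Phi_pos_ge1: assumes "0 < x" "1 \<le> Phi x" shows "1 \<le> x"
  using Phi_lt1[of x] assms by linarith

lemma Phi_inj: assumes "1 \<le> a" "1 \<le> b" "Phi a = Phi b" shows "a = b"
  using Phi_strict_mono[of a b] Phi_strict_mono[of b a] assms by (cases a b rule: linorder_cases) auto

lemma rho_eq: assumes "0 < x" "Phi x = r^2 + 1" shows "rho r = x"
  unfolding rho_def
proof (rule the_equality)
  show "0 < x \<and> (2 * exp (x - 1) - 1) / x\<^sup>2 = r\<^sup>2 + 1" using assms by (simp add: Phi_def)
  fix z assume z: "0 < z \<and> (2 * exp (z - 1) - 1) / z\<^sup>2 = r\<^sup>2 + 1"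
  then have "Phi z = r^2 + 1" by (simp add: Phi_def)
  moreover have "1 \<le> r^2 + 1" by simp
  ultimately show "z = x" using Phi_inj Phi_pos_ge1 assms z by metis
qed

lemma rho_props: "1 \<le> rho r \<and> Phi (rho r) = r^2 + 1"
proof -
  obtain x where "x \<ge> 1" "Phi x = r^2 + 1" using Phi_exists[of "r^2+1"] by auto
  then show ?thesis using rho_eq[of x r] by auto
qed

lemma rho_ge1: "1 \<le> rho r" using rho_props by blast
lemma rho_Phi: "Phi (rho r) = r^2 + 1" using rho_props by blast
lemma rho_0: "rho 0 = 1" using rho_eq[of 1 0] Phi_1 by simp
lemma rho_gt1: assumes "r \<noteq> 0" shows "1 < rho r"
proof -
  have "rho r \<noteq> 1" using rho_Phi[of r] Phi_1 assms by auto
  then show ?thesis using rho_ge1[of r] by simp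
qed
lemma rho_mono: assumes "0 \<le> r" "r \<le> s" shows "rho r \<le> rho s"
proof (rule ccontr)
  assume "\<not> rho r \<le> rho s"
  then have "Phi (rho s) < Phi (rho r)" using Phi_strict_mono rho_ge1 by simp
  then have "s^2 < r^2" using rho_Phi by simp
  moreover have "r^2 \<le> s^2" using assms by (intro power_mono) auto
  ultimately show False by simp
qed



locale lot =
  fixes p1 p2 :: real
  assumes p1_pos: "0 < p1" and p12: "p1 < p2"
begin

definition "D = p2 * ln (p2 / p1) - (p2 - p1)"
definition "H y = (p2 * ln (y / p1) - (y - p1)) / D"
definition "f p = indicator {p1..p2} p * ((p2 / p - 1) / D)"
definition "Fc x = (if x < p1 then 0 else if p2 < x then 1 else H x)"
definition "Md = density lborel f"

lemma p2_pos: "0 < p2" using p1_pos p12 by simp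

lemma D_pos: "0 < D"
proof -
  have "ln (p1/p2) \<noteq> 0" using p1_pos p12 by simp
  then have "1 + ln (p1/p2) < exp (ln (p1/p2))" by (rule exp_strict)
  then have "1 + ln (p1/p2) < p1/p2" using p1_pos p2_pos by simp
  moreover have "ln (p1/p2) = - ln (p2/p1)" using p1_pos p2_pos by (simp add: ln_div)
  ultimately have "p2 * (1 - p1/p2) < p2 * ln (p2/p1)" using p2_pos by (intro mult_strict_left_mono) auto
  moreover have "p2 * (1 - p1/p2) = p2 - p1" using p2_pos by (simp add: field_simps)
  ultimately show ?thesis unfolding D_def by linarith
qed

lemma D_nz[simp]: "D \<noteq> 0" using D_pos by simp

lemma H_p1: "H p1 = 0" by (simp add: H_def)
lemma H_p2: "H p2 = 1" using D_pos by (simp add: H_def D_def)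

lemma H_deriv: "0 < y \<Longrightarrow> (H has_real_derivative (p2 / y - 1) / D) (at y)"
  unfolding H_def using p1_pos
  by (auto intro!: derivative_eq_intros simp: field_simps)

lemma ftc_H: assumes "p1 \<le> a" "a \<le> b"
  shows "(\<integral>x. indicator {a..b} x *\<^sub>R ((p2 / x - 1) / D) \<partial>lborel) = H b - H a"
proof (rule integral_FTC_atLeastAtMost[OF assms(2)])
  fix x assume "a \<le> x" "x \<le> b"
  then have "0 < x" using assms p1_pos by simp
  then show "(H has_vector_derivative (p2 / x - 1) / D) (at x within {a..b})"
    using H_deriv has_real_derivative_iff_has_vector_derivative has_vector_derivative_at_within by blast
next
  show "continuous_on {a..b} (\<lambda>x. (p2 / x - 1) / D)"
    using assms p1_pos by (intro continuous_intros) auto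
qed

definition "G y = (p2 * y - y^2 / 2) / D"

lemma ftc_G: assumes "a \<le> b"
  shows "(\<integral>x. indicator {a..b} x *\<^sub>R ((p2 - x) / D) \<partial>lborel) = G b - G a"
proof (rule integral_FTC_atLeastAtMost[OF assms(1)])
  fix x assume "a \<le> x" "x \<le> b"
  have "(G has_real_derivative (p2 - x) / D) (at x)"
    unfolding G_def by (auto intro!: derivative_eq_intros simp: field_simps)
  then show "(G has_vector_derivative (p2 - x) / D) (at x within {a..b})"
    using has_real_derivative_iff_has_vector_derivative has_vector_derivative_at_within by blast
next
  show "continuous_on {a..b} (\<lambda>x. (p2 - x) / D)"
    by (intro continuous_intros) auto
qed

lemma f_meas[measurable]: "f \<in> borel_measurable borel"
  unfolding f_def by measurable

lemma f_nonneg: "0 \<le> f p"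
  using D_pos p1_pos by (auto simp: f_def indicator_def field_simps)

lemma int_f_Iic: "(\<integral>p. f p * indicator {..x} p \<partial>lborel) = Fc x"
proof -
  consider "x < p1" | "p1 \<le> x" "x \<le> p2" | "p2 < x" by linarith
  then show ?thesis
  proof cases
    case 1
    then have "(\<lambda>p. f p * indicator {..x} p) = (\<lambda>_. 0)" by (auto simp: f_def indicator_def)
    then show ?thesis using 1 by (simp add: Fc_def)
  next
    case 2
    then have "(\<lambda>p. f p * indicator {..x} p) = (\<lambda>p. indicator {p1..x} p *\<^sub>R ((p2 / p - 1) / D))"
      by (auto simp: f_def indicator_def)
    then have "(\<integral>p. f p * indicator {..x} p \<partial>lborel) = H x - H p1"
      using 2 ftc_H[of p1 x] by simp
    then show ?thesis using 2 H_p1 by (simp add: Fc_def)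
  next
    case 3
    then have "(\<lambda>p. f p * indicator {..x} p) = (\<lambda>p. indicator {p1..p2} p *\<^sub>R ((p2 / p - 1) / D))"
      by (auto simp: f_def indicator_def)
    then have "(\<integral>p. f p * indicator {..x} p \<partial>lborel) = H p2 - H p1"
      using 3 p12 ftc_H[of p1 p2] by simp
    then show ?thesis using 3 H_p1 H_p2 p12 by (simp add: Fc_def)
  qed
qed

lemma f_integrable: "integrable lborel f"
proof -
  have "set_integrable lborel {p1..p2} (\<lambda>x. (p2 / x - 1) / D)"
    using p1_pos p12 by (intro borel_integrable_atLeastAtMost' continuous_intros) auto
  then show ?thesis unfolding set_integrable_def f_def by (simp add: mult.commute)
qed

lemma int_f: "(\<integral>p. f p \<partial>lborel) = 1"
proof -
  have "f = (\<lambda>p. indicator {p1..p2} p *\<^sub>R ((p2 / p - 1) / D))"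
    by (auto simp: f_def indicator_def)
  then have "(\<integral>p. f p \<partial>lborel) = H p2 - H p1" using ftc_H[of p1 p2] p12 by simp
  then show ?thesis using H_p1 H_p2 by simp
qed

lemma Md_prob: "prob_space Md"
proof (rule prob_spaceI)
  have "emeasure Md (space Md) = (\<integral>\<^sup>+ p. ennreal (f p) \<partial>lborel)"
    unfolding Md_def by (simp add: emeasure_density)
  also have "\<dots> = ennreal (\<integral>p. f p \<partial>lborel)"
    using f_integrable f_nonneg by (intro nn_integral_eq_integral) auto
  finally show "emeasure Md (space Md) = 1" using int_f by simp
qed

lemma Md_real_distribution: "real_distribution Md"
  unfolding real_distribution_def real_distribution_axioms_def using Md_prob
  by (simp add: Md_def)

lemma cdf_Md: "cdf Md = Fc"
proof
  fix x
  have "cdf Md x = (\<integral>p. indicator {..x} p \<partial>Md)"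
    using Md_prob by (simp add: cdf_def Md_def)
  also have "\<dots> = (\<integral>p. f p * indicator {..x} p \<partial>lborel)"
    unfolding Md_def using f_nonneg by (subst integral_density) auto
  finally show "cdf Md x = Fc x" using int_f_Iic by simp
qed

lemma interval_measure_Fc: "interval_measure Fc = Md"
proof -
  interpret real_distribution Md by (rule Md_real_distribution)
  have "real_distribution (interval_measure Fc)"
    by (rule real_distribution_interval_measure)
       (use cdf_nondecreasing cdf_is_right_cont cdf_lim_at_bot cdf_lim_at_top_prob in \<open>auto simp: cdf_Md\<close>)
  moreover have "cdf (interval_measure Fc) = Fc"
    by (rule cdf_interval_measure)
       (use cdf_nondecreasing cdf_is_right_cont cdf_lim_at_bot in \<open>auto simp: cdf_Md\<close>)
  ultimately show ?thesis using cdf_unique Md_real_distribution cdf_Md by metis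
qed

end


definition good_lottery :: "real measure \<Rightarrow> real \<Rightarrow> bool" where
  "good_lottery P K \<longleftrightarrow> real_distribution P \<and> (AE p in P. 0 \<le> p \<and> p \<le> K)"

context
  fixes P :: "real measure" and K :: real
  assumes good: "good_lottery P K"
begin

lemma gl_rd: "real_distribution P" using good by (simp add: good_lottery_def)
lemma gl_AE: "AE p in P. 0 \<le> p \<and> p \<le> K" using good by (simp add: good_lottery_def)

lemma gl_sets[measurable_cong, simp]: "sets P = sets borel"
  using gl_rd by (simp add: real_distribution_def real_distribution_axioms_def)

lemma gl_prob: "prob_space P" using gl_rd by (simp add: real_distribution_def)

lemma gl_int: "integrable P (\<lambda>p. indicator {..t} p * (a + b * p))"
proof -
  interpret prob_space P by (rule gl_prob)
  show ?thesis
  proof (rule integrable_const_bound[where B="\<bar>a\<bar> + \<bar>b\<bar> * K"])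
    show "AE p in P. norm (indicator {..t} p * (a + b * p)) \<le> \<bar>a\<bar> + \<bar>b\<bar> * K"
      using gl_AE
    proof eventually_elim
      case (elim p)
      have "\<bar>a + b * p\<bar> \<le> \<bar>a\<bar> + \<bar>b\<bar> * K"
        using elim abs_triangle_ineq[of a "b*p"] mult_left_mono[of "\<bar>p\<bar>" K "\<bar>b\<bar>"] by (simp add: abs_mult)
      then show ?case by (auto simp: indicator_def)
    qed
  qed simp
qed

lemma gl_int_pay: "integrable P (\<lambda>p. indicator {..t} p * p)"
  using gl_int[of t 0 1] by simp

lemma sale_prob_eq: "sale_prob P t = (\<integral>p. indicator {..t} p \<partial>P)"
  using gl_prob by (simp add: sale_prob_def prob_space.prob_space)

lemma util_eq: "sale_prob P t * v - exp_payment P t = (\<integral>p. indicator {..t} p * (v - p) \<partial>P)"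
proof -
  have "(\<integral>p. indicator {..t} p * (v - p) \<partial>P) = (\<integral>p. indicator {..t} p * v - indicator {..t} p * p \<partial>P)"
    by (simp add: algebra_simps)
  also have "\<dots> = (\<integral>p. indicator {..t} p * v \<partial>P) - (\<integral>p. indicator {..t} p * p \<partial>P)"
    using gl_int[of t v 0] gl_int_pay[of t] by (intro Bochner_Integration.integral_diff) auto
  also have "(\<integral>p. indicator {..t} p * v \<partial>P) = sale_prob P t * v"
    by (simp add: sale_prob_eq)
  finally show ?thesis by (simp add: exp_payment_def)
qed

lemma sale_prob_bounds: "0 \<le> sale_prob P t \<and> sale_prob P t \<le> 1"
proof -
  interpret prob_space P by (rule gl_prob)
  show ?thesis by (simp add: sale_prob_def)
qed

lemma pay_nonneg: "0 \<le> exp_payment P t"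
  unfolding exp_payment_def
  by (rule integral_nonneg_AE) (use gl_AE in \<open>eventually_elim, auto simp: indicator_def\<close>)

lemma pay_le: "exp_payment P t \<le> K"
proof -
  interpret prob_space P by (rule gl_prob)
  have "exp_payment P t \<le> (\<integral>p. K \<partial>P)"
    unfolding exp_payment_def
  proof (rule integral_mono_AE)
    show "integrable P (\<lambda>p. indicator {..t} p * p)" by (rule gl_int_pay)
    show "AE p in P. indicator {..t} p * p \<le> K"
      using gl_AE by eventually_elim (auto simp: indicator_def)
  qed simp
  then show ?thesis by (simp add: prob_space)
qed

lemma pay_mono: "mono (exp_payment P)"
proof
  fix s t :: real assume "s \<le> t"
  then show "exp_payment P s \<le> exp_payment P t"
    unfolding exp_payment_def
    by (intro integral_mono_AE gl_int_pay) (use gl_AE in \<open>eventually_elim, auto simp: indicator_def\<close>)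
qed

lemma pay_meas[measurable]: "exp_payment P \<in> borel_measurable borel"
  using pay_mono by (rule borel_measurable_mono)

lemma IR: "0 \<le> sale_prob P v * v - exp_payment P v"
  unfolding util_eq
  by (rule integral_nonneg_AE) (auto simp: indicator_def)

lemma IC: "sale_prob P w * v - exp_payment P w \<le> sale_prob P v * v - exp_payment P v"
  unfolding util_eq
  using gl_int[of w v "-1"] gl_int[of v v "-1"]
  by (intro integral_mono_AE) (auto simp: indicator_def)

end

lemma good_return: "0 \<le> \<mu> \<Longrightarrow> good_lottery (return borel \<mu>) \<mu>"
  unfolding good_lottery_def real_distribution_def real_distribution_axioms_def
  by (auto simp: prob_space_return AE_return)

context lot
begin

lemma AE_Md: "AE p in Md. p1 \<le> p \<and> p \<le> p2"
  unfolding Md_def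
  by (subst AE_density) (auto simp: f_def indicator_def)

lemma good_Md: "good_lottery Md p2"
  unfolding good_lottery_def using Md_real_distribution AE_Md p1_pos
  by (auto elim!: eventually_mono)

definition "q x = ((p2 - p1)^2 - (p2 - x)^2) / (2 * D)"

lemma pay_Md_ge: "q x \<le> exp_payment Md x"
proof -
  have pay: "exp_payment Md x = (\<integral>p. f p * (indicator {..x} p * p) \<partial>lborel)"
    unfolding exp_payment_def Md_def using f_nonneg by (subst integral_density) auto
  have Gq: "G y - G p1 = q y" for y
    unfolding G_def q_def by (simp add: field_simps power2_eq_square)
  consider "x < p1" | "p1 \<le> x" "x \<le> p2" | "p2 < x" by linarith
  then show ?thesis
  proof cases
    case 1
    then have "(\<lambda>p. f p * (indicator {..x} p * p)) = (\<lambda>_. 0)" by (auto simp: f_def indicator_def)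
    then have "exp_payment Md x = 0" using pay by simp
    moreover have "q x \<le> 0"
    proof -
      have "(p2 - p1)^2 \<le> (p2 - x)^2" using 1 p12 by (intro power_mono) auto
      then show ?thesis unfolding q_def using D_pos by (simp add: divide_nonpos_pos)
    qed
    ultimately show ?thesis by simp
  next
    case 2
    then have "(\<lambda>p. f p * (indicator {..x} p * p)) = (\<lambda>p. indicator {p1..x} p *\<^sub>R ((p2 - p) / D))"
      using p1_pos by (auto simp: f_def indicator_def field_simps)
    then have "exp_payment Md x = G x - G p1" using pay 2 ftc_G[of p1 x] by simp
    then show ?thesis using Gq by simp
  next
    case 3
    then have "(\<lambda>p. f p * (indicator {..x} p * p)) = (\<lambda>p. indicator {p1..p2} p *\<^sub>R ((p2 - p) / D))"
      using p1_pos by (auto simp: f_def indicator_def field_simps)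
    then have "exp_payment Md x = G p2 - G p1" using pay p12 ftc_G[of p1 p2] by simp
    moreover have "q x \<le> q p2" unfolding q_def using D_pos by (simp add: divide_right_mono)
    ultimately show ?thesis using Gq by simp
  qed
qed

end



lemma ends_props:
  fixes \<mu> \<sigma> :: real
  assumes mu: "0 < \<mu>"
  defines "\<rho> \<equiv> rho (\<sigma> / \<mu>)"
  shows "\<mu> / \<rho> * (1 + ln (\<mu> / \<rho> * exp (\<rho> - 1) / (\<mu> / \<rho>))) = \<mu>"
    and "\<mu> / \<rho> * (2 * (\<mu> / \<rho> * exp (\<rho> - 1)) - \<mu> / \<rho>) = \<mu>\<^sup>2 + \<sigma>\<^sup>2"
proof -
  have r1: "1 \<le> \<rho>" unfolding \<rho>_def by (rule rho_ge1)
  have Ph: "Phi \<rho> = (\<sigma>/\<mu>)^2 + 1" unfolding \<rho>_def by (rule rho_Phi)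
  have "\<mu> / \<rho> * exp (\<rho> - 1) / (\<mu> / \<rho>) = exp (\<rho> - 1)" using mu r1 by simp
  then show "\<mu> / \<rho> * (1 + ln (\<mu> / \<rho> * exp (\<rho> - 1) / (\<mu> / \<rho>))) = \<mu>" using r1 by simp
  have A: "\<mu> / \<rho> * (2 * (\<mu> / \<rho> * exp (\<rho> - 1)) - \<mu> / \<rho>) = \<mu>^2 * Phi \<rho>"
    using r1 by (simp add: Phi_def field_simps power2_eq_square)
  have B: "\<mu>^2 * ((\<sigma>/\<mu>)^2 + 1) = \<mu>\<^sup>2 + \<sigma>\<^sup>2" using mu by (simp add: field_simps power2_eq_square)
  from A B show "\<mu> / \<rho> * (2 * (\<mu> / \<rho> * exp (\<rho> - 1)) - \<mu> / \<rho>) = \<mu>\<^sup>2 + \<sigma>\<^sup>2" using Ph by simp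
qed

lemma loglottery_ends_eq:
  assumes mu: "0 < \<mu>" and sg: "0 < \<sigma>"
  defines "\<rho> \<equiv> rho (\<sigma> / \<mu>)"
  shows "loglottery_ends \<mu> \<sigma> = (\<mu> / \<rho>, \<mu> / \<rho> * exp (\<rho> - 1))"
proof -
  have r1: "1 \<le> \<rho>" unfolding \<rho>_def by (rule rho_ge1)
  have Ph: "Phi \<rho> = (\<sigma>/\<mu>)^2 + 1" unfolding \<rho>_def by (rule rho_Phi)
  let ?P = "\<lambda>(a::real, b::real). 0 < a \<and> 0 < b \<and> a * (1 + ln (b / a)) = \<mu> \<and> a * (2 * b - a) = \<mu>\<^sup>2 + \<sigma>\<^sup>2"
  show ?thesis
    unfolding loglottery_ends_def
  proof (rule the_equality)
    show "?P (\<mu> / \<rho>, \<mu> / \<rho> * exp (\<rho> - 1))"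
      using mu r1 ends_props[OF mu, of \<sigma>] unfolding \<rho>_def[symmetric] by simp
  next
    fix x assume "?P x"
    then obtain a b where x: "x = (a, b)" and a: "0 < a" and b: "0 < b"
      and e1: "a * (1 + ln (b / a)) = \<mu>" and e2: "a * (2 * b - a) = \<mu>\<^sup>2 + \<sigma>\<^sup>2"
      by (cases x) auto
    define r' where "r' = 1 + ln (b / a)"
    have r'pos: "0 < r'" using e1 a mu unfolding r'_def by (metis zero_less_mult_pos)
    have ar: "a = \<mu> / r'" using e1 r'pos unfolding r'_def by (simp add: field_simps)
    have ba: "b = a * exp (r' - 1)" using a b unfolding r'_def by simp
    have ex: "exp (r' - 1) = b / a" using ba a by simp
    have rr: "r' = \<mu> / a" using ar a r'pos by (simp add: field_simps)
    have "Phi r' = (2 * (b/a) - 1) / (\<mu>/a)^2" unfolding Phi_def ex by (subst rr) simp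
    also have "\<dots> = a * (2 * b - a) / \<mu>^2" using a mu by (simp add: field_simps power2_eq_square)
    also have "\<dots> = (\<sigma>/\<mu>)^2 + 1" using e2 mu by (simp add: field_simps power2_eq_square)
    finally have "rho (\<sigma>/\<mu>) = r'" using rho_eq r'pos by blast
    then show "x = (\<mu> / \<rho>, \<mu> / \<rho> * exp (\<rho> - 1))" using x ar ba \<rho>_def by simp
  qed
qed

lemma loglottery_lot:
  assumes mu: "0 < \<mu>" and sg: "0 < \<sigma>"
  defines "\<rho> \<equiv> rho (\<sigma> / \<mu>)"
  defines "p1 \<equiv> \<mu> / \<rho>" and "p2 \<equiv> \<mu> / \<rho> * exp (\<rho> - 1)"
  shows "lot p1 p2" and "loglottery \<mu> \<sigma> = lot.Md p1 p2"
    and "p1 * (1 + ln (p2 / p1)) = \<mu>" and "p1 * (2 * p2 - p1) = \<mu>\<^sup>2 + \<sigma>\<^sup>2"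
proof -
  have r1: "1 < \<rho>" unfolding \<rho>_def using mu sg by (intro rho_gt1) simp
  have "\<mu> / \<rho> * 1 < \<mu> / \<rho> * exp (\<rho> - 1)" using mu r1 by (intro mult_strict_left_mono) auto
  then show L: "lot p1 p2" unfolding lot_def p1_def p2_def using mu r1 by simp
  have ends: "loglottery_ends \<mu> \<sigma> = (p1, p2)"
    unfolding p1_def p2_def \<rho>_def using loglottery_ends_eq[OF mu sg] by simp
  have "loglottery_cdf \<mu> \<sigma> = lot.Fc p1 p2"
    by (rule ext) (simp add: loglottery_cdf_def ends lot.Fc_def[OF L] lot.H_def[OF L] lot.D_def[OF L])
  then show "loglottery \<mu> \<sigma> = lot.Md p1 p2"
    using sg lot.interval_measure_Fc[OF L] by (simp add: loglottery_def)
  show "p1 * (1 + ln (p2 / p1)) = \<mu>" "p1 * (2 * p2 - p1) = \<mu>\<^sup>2 + \<sigma>\<^sup>2"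
    using ends_props[OF mu, of \<sigma>] unfolding p1_def p2_def \<rho>_def by simp_all
qed



lemma good_loglottery:
  assumes mu: "0 < \<mu>" and sg: "0 \<le> \<sigma>"
  shows "\<exists>K. good_lottery (loglottery \<mu> \<sigma>) K"
proof (cases "\<sigma> = 0")
  case True
  then show ?thesis using good_return[of \<mu>] mu by (auto simp: loglottery_def)
next
  case False
  with sg have sg': "0 < \<sigma>" by simp
  show ?thesis using loglottery_lot(1,2)[OF mu sg'] lot.good_Md by metis
qed

lemma single_item:
  fixes M :: "'a measure" and X :: "'a \<Rightarrow> real"
  assumes ps: "prob_space M" and Xm[measurable]: "X \<in> borel_measurable M"
    and iX: "integrable M X" and iX2: "integrable M (\<lambda>x. (X x)^2)"
    and EX: "prob_space.expectation M X = \<mu>"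
    and VX: "sqrt (prob_space.variance M X) \<le> \<sigma>"
    and mu: "0 < \<mu>" and sg: "0 \<le> \<sigma>"
  shows "integrable M (\<lambda>x. exp_payment (loglottery \<mu> \<sigma>) (X x))"
    and "\<mu> / rho (\<sigma> / \<mu>) \<le> (\<integral>x. exp_payment (loglottery \<mu> \<sigma>) (X x) \<partial>M)"
proof -
  interpret prob_space M by (rule ps)
  obtain K where gK: "good_lottery (loglottery \<mu> \<sigma>) K" using good_loglottery[OF mu sg] by blast
  note [measurable] = pay_meas[OF gK]
  show int: "integrable M (\<lambda>x. exp_payment (loglottery \<mu> \<sigma>) (X x))"
    by (rule integrable_const_bound[where B=K]) (use pay_nonneg[OF gK] pay_le[OF gK] in auto)
  have var: "variance X = expectation (\<lambda>x. (X x)^2) - \<mu>^2" using variance_eq[OF iX iX2] EX by simp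
  have vnn: "0 \<le> variance X" by (rule integral_nonneg_AE) auto
  have vle: "variance X \<le> \<sigma>^2"
  proof -
    have "sqrt (variance X) ^ 2 \<le> \<sigma> ^ 2" using VX vnn by (intro power_mono) auto
    then show ?thesis using vnn by simp
  qed
  show "\<mu> / rho (\<sigma> / \<mu>) \<le> (\<integral>x. exp_payment (loglottery \<mu> \<sigma>) (X x) \<partial>M)"
  proof (cases "\<sigma> = 0")
    case True
    have "variance X = 0" using vle vnn True by simp
    moreover have "integrable M (\<lambda>x. (X x - expectation X)^2)"
      using iX iX2 by (simp add: power2_diff)
    ultimately have "AE x in M. (X x - expectation X)^2 = 0"
      using integral_nonneg_eq_0_iff_AE[of M "\<lambda>x. (X x - expectation X)^2"] by simp
    then have ae: "AE x in M. X x = \<mu>" using EX by simp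
    have pay: "exp_payment (loglottery \<mu> \<sigma>) \<mu> = \<mu>"
      using True by (simp add: loglottery_def exp_payment_def integral_return)
    have "(\<integral>x. exp_payment (loglottery \<mu> \<sigma>) (X x) \<partial>M) = (\<integral>x. \<mu> \<partial>M)"
      by (rule integral_cong_AE) (use ae pay in \<open>auto elim!: eventually_mono\<close>)
    then show ?thesis using True by (simp add: rho_0 prob_space)
  next
    case False
    with sg have sg': "0 < \<sigma>" by simp
    define \<rho> where "\<rho> = rho (\<sigma> / \<mu>)"
    define p1 where "p1 = \<mu> / \<rho>"
    define p2 where "p2 = \<mu> / \<rho> * exp (\<rho> - 1)"
    have L: "lot p1 p2" and LL: "loglottery \<mu> \<sigma> = lot.Md p1 p2"
      and e1: "p1 * (1 + ln (p2 / p1)) = \<mu>" and e2: "p1 * (2 * p2 - p1) = \<mu>\<^sup>2 + \<sigma>\<^sup>2"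
      using loglottery_lot[OF mu sg'] unfolding p1_def p2_def \<rho>_def by auto
    interpret lot p1 p2 by (rule L)
    define c0 where "c0 = ((p2 - p1)^2 - p2^2) / (2 * D)"
    have qform: "q y = c0 + (p2 / D) * y - (1 / (2 * D)) * y^2" for y
      unfolding q_def c0_def by (simp add: field_simps power2_eq_square)
    have iq: "integrable M (\<lambda>x. q (X x))"
      unfolding qform using iX iX2 by simp
    have "(\<integral>x. q (X x) \<partial>M) = c0 + (p2 / D) * \<mu> - (1 / (2 * D)) * expectation (\<lambda>x. (X x)^2)"
      unfolding qform using iX iX2 EX by (simp add: prob_space)
    also have "\<dots> \<ge> c0 + (p2 / D) * \<mu> - (1 / (2 * D)) * (\<sigma>^2 + \<mu>^2)"
      using var vle D_pos by (simp add: divide_right_mono)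
    finally have lb: "(\<integral>x. q (X x) \<partial>M) \<ge> c0 + (p2 / D) * \<mu> - (1 / (2 * D)) * (\<sigma>^2 + \<mu>^2)" .
    have "c0 + (p2 / D) * \<mu> - (1 / (2 * D)) * (\<sigma>^2 + \<mu>^2) = p1"
    proof -
      have "ln (p2 / p1) = \<rho> - 1" using p1_pos mu rho_ge1[of "\<sigma>/\<mu>"] unfolding p1_def p2_def \<rho>_def by simp
      then have Deq: "D = p2 * (\<rho> - 1) - (p2 - p1)" by (simp add: D_def)
      have mueq: "\<mu> = p1 * \<rho>" using e1 \<open>ln (p2 / p1) = \<rho> - 1\<close> by simp
      have "c0 + (p2 / D) * \<mu> - (1 / (2 * D)) * (\<sigma>^2 + \<mu>^2)
          = ((p2 - p1)^2 - p2^2 + 2 * p2 * \<mu> - p1 * (2 * p2 - p1)) / (2 * D)"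
        using e2 by (simp add: c0_def field_simps)
      also have "(p2 - p1)^2 - p2^2 + 2 * p2 * \<mu> - p1 * (2 * p2 - p1) = (2 * D) * p1"
        unfolding Deq mueq by (simp add: algebra_simps power2_eq_square)
      finally show ?thesis using D_pos by simp
    qed
    with lb have "(\<integral>x. q (X x) \<partial>M) \<ge> p1" by simp
    also have "(\<integral>x. q (X x) \<partial>M) \<le> (\<integral>x. exp_payment (loglottery \<mu> \<sigma>) (X x) \<partial>M)"
      using iq int pay_Md_ge LL by (intro integral_mono) auto
    finally show ?thesis unfolding p1_def \<rho>_def .
  qed
qed



lemma vec_nth_meas[measurable]: "(\<lambda>x::real^'m::finite. x $ j) \<in> borel_measurable borel"
  by (intro borel_measurable_continuous_onI continuous_on_component continuous_on_id)

lemma dist_classD: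
  assumes "F \<in> dist_class \<mu> \<sigma>"
  shows "prob_space F" "sets F = sets borel" "AE v in F. v \<in> nonneg_vecs"
    "\<And>j. integrable F (\<lambda>v. v $ j)" "\<And>j. integrable F (\<lambda>v. (v $ j)\<^sup>2)"
    "\<And>j. (\<integral>v. v $ j \<partial>F) = \<mu> $ j"
  using assms unfolding dist_class_def by auto

lemma dist_classD2:
  assumes "F \<in> dist_class \<mu> \<sigma>"
  shows "sqrt (\<integral>v. (v $ j - (\<integral>v. v $ j \<partial>F))\<^sup>2 \<partial>F) \<le> \<sigma> $ j"
  using assms unfolding dist_class_def by blast

lemma ratio_le:
  assumes "a \<le> ennreal S" "ennreal (S / r) \<le> b" "0 < S" "0 < r"
  shows "ratio a b \<le> ennreal r"
proof -
  have b0: "b \<noteq> 0" using assms by (metis divide_pos_pos ennreal_eq_0_iff not_le order_antisym_conv zero_le)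
  have "a / b \<le> ennreal S / b" by (rule divide_right_mono_ennreal) (rule assms(1))
  also have "\<dots> \<le> ennreal r"
  proof (cases b)
    case (real b')
    then have b': "S / r \<le> b'" "0 < S / r" using assms by auto
    have "0 < b'" using b' by linarith
    then have "ennreal S / b = ennreal (S / b')" using real assms by (simp add: divide_ennreal)
    also have "\<dots> \<le> ennreal (S / (S / r))"
      using b' assms \<open>0 < b'\<close> by (intro ennreal_leI divide_left_mono) auto
    finally show ?thesis using assms by simp
  next
    case top
    then show ?thesis by simp
  qed
  finally show ?thesis using b0 by (simp add: ratio_def)
qed

lemma OPT_le:
  fixes \<mu> \<sigma> :: "real ^ 'm::finite"
  assumes F: "F \<in> dist_class \<mu> \<sigma>"
  shows "OPT F \<le> ennreal (\<Sum>j\<in>UNIV. \<mu> $ j)"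
  unfolding OPT_def
proof (rule SUP_least)
  fix M :: "'m mechanism" assume "M \<in> {M. admissible_mech M}"
  then have tr: "truthful M" by (simp add: admissible_mech_def)
  note D = dist_classD[OF F]
  have pt: "snd M v \<le> (\<Sum>j\<in>UNIV. v $ j)" if v: "v \<in> nonneg_vecs" for v
  proof -
    have ir: "0 \<le> fst M v \<bullet> v - snd M v" and b: "\<And>j. 0 \<le> fst M v $ j \<and> fst M v $ j \<le> 1"
      using tr v unfolding truthful_def by auto
    have "fst M v \<bullet> v = (\<Sum>j\<in>UNIV. fst M v $ j * v $ j)" by (simp add: inner_vec_def)
    also have "\<dots> \<le> (\<Sum>j\<in>UNIV. v $ j)"
      using b v by (intro sum_mono) (auto simp: nonneg_vecs_def intro!: mult_left_le_one_le)
    finally show ?thesis using ir by simp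
  qed
  have "REV M F \<le> (\<integral>\<^sup>+ v. ennreal (\<Sum>j\<in>UNIV. v $ j) \<partial>F)"
    unfolding REV_def using D(3) by (intro nn_integral_mono_AE) (auto elim!: eventually_mono intro!: ennreal_leI pt)
  also have "\<dots> = ennreal (\<integral>v. (\<Sum>j\<in>UNIV. v $ j) \<partial>F)"
    using D(3,4) by (intro nn_integral_eq_integral) (auto elim!: eventually_mono simp: nonneg_vecs_def intro!: sum_nonneg)
  also have "(\<integral>v. (\<Sum>j\<in>UNIV. v $ j) \<partial>F) = (\<Sum>j\<in>UNIV. \<mu> $ j)"
    using D(4,6) by (subst Bochner_Integration.integral_sum) auto
  finally show "REV M F \<le> ennreal (\<Sum>j\<in>UNIV. \<mu> $ j)" .
qed

lemma good_K:
  fixes \<mu> \<sigma> :: "real ^ 'm::finite"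
  assumes mu_pos: "\<forall>j. 0 < \<mu> $ j" and sigma_nonneg: "\<forall>j. 0 \<le> \<sigma> $ j"
  obtains K where "\<And>j. good_lottery (loglottery (\<mu> $ j) (\<sigma> $ j)) (K j)"
proof -
  have "\<forall>j. \<exists>K. good_lottery (loglottery (\<mu> $ j) (\<sigma> $ j)) K"
    using good_loglottery assms by blast
  then obtain K where "\<forall>j. good_lottery (loglottery (\<mu> $ j) (\<sigma> $ j)) (K j)" by metis
  then show ?thesis using that by blast
qed

lemma var_le:
  fixes F :: "'a measure"
  assumes "prob_space F" "sqrt (prob_space.variance F X) \<le> s"
  shows "prob_space.variance F X \<le> s^2" "0 \<le> prob_space.variance F X"
proof -
  interpret prob_space F by fact
  show vnn: "0 \<le> variance X" by (rule integral_nonneg_AE) auto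
  have "sqrt (variance X) ^ 2 \<le> s ^ 2" using assms(2) vnn by (intro power_mono) auto
  then show "variance X \<le> s^2" using vnn by simp
qed

lemma admissible_sep:
  fixes \<mu> \<sigma> :: "real ^ 'm::finite"
  assumes mu_pos: "\<forall>j. 0 < \<mu> $ j" and sigma_nonneg: "\<forall>j. 0 \<le> \<sigma> $ j"
  shows "admissible_mech (separate_loglottery \<mu> \<sigma>)"
proof -
  obtain K where gK: "\<And>j. good_lottery (loglottery (\<mu> $ j) (\<sigma> $ j)) (K j)" using good_K assms by metis
  let ?P = "\<lambda>j. loglottery (\<mu> $ j) (\<sigma> $ j)"
  have u: "fst (separate_loglottery \<mu> \<sigma>) w \<bullet> v - snd (separate_loglottery \<mu> \<sigma>) w
      = (\<Sum>j\<in>UNIV. sale_prob (?P j) (w $ j) * v $ j - exp_payment (?P j) (w $ j))" for v w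
    by (simp add: separate_loglottery_def inner_vec_def sum_subtractf)
  have "truthful (separate_loglottery \<mu> \<sigma>)"
    unfolding truthful_def
  proof (intro conjI ballI allI)
    fix v :: "real ^ 'm" and j
    show "0 \<le> fst (separate_loglottery \<mu> \<sigma>) v $ j" "fst (separate_loglottery \<mu> \<sigma>) v $ j \<le> 1"
      using sale_prob_bounds[OF gK] by (auto simp: separate_loglottery_def)
  next
    fix v :: "real ^ 'm"
    show "0 \<le> snd (separate_loglottery \<mu> \<sigma>) v"
      using pay_nonneg[OF gK] by (auto simp: separate_loglottery_def intro!: sum_nonneg)
  next
    fix v w :: "real ^ 'm"
    show "fst (separate_loglottery \<mu> \<sigma>) w \<bullet> v - snd (separate_loglottery \<mu> \<sigma>) w
        \<le> fst (separate_loglottery \<mu> \<sigma>) v \<bullet> v - snd (separate_loglottery \<mu> \<sigma>) v"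
      unfolding u using IC[OF gK] by (intro sum_mono) auto
  next
    fix v :: "real ^ 'm"
    show "0 \<le> fst (separate_loglottery \<mu> \<sigma>) v \<bullet> v - snd (separate_loglottery \<mu> \<sigma>) v"
      unfolding u using IR[OF gK] by (intro sum_nonneg) auto
  qed
  moreover have "snd (separate_loglottery \<mu> \<sigma>) \<in> borel_measurable borel"
    using pay_meas[OF gK] by (simp add: separate_loglottery_def)
  ultimately show ?thesis by (simp add: admissible_mech_def)
qed

lemma REV_sep:
  fixes \<mu> \<sigma> :: "real ^ 'm::finite"
  assumes mu_pos: "\<forall>j. 0 < \<mu> $ j" and sigma_nonneg: "\<forall>j. 0 \<le> \<sigma> $ j"
    and R: "\<forall>j. \<sigma> $ j / \<mu> $ j \<le> R"
    and F: "F \<in> dist_class \<mu> \<sigma>"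
  shows "ennreal ((\<Sum>j\<in>UNIV. \<mu> $ j) / rho R) \<le> REV (separate_loglottery \<mu> \<sigma>) F"
proof -
  obtain K where gK: "\<And>j. good_lottery (loglottery (\<mu> $ j) (\<sigma> $ j)) (K j)" using good_K assms by metis
  let ?P = "\<lambda>j. loglottery (\<mu> $ j) (\<sigma> $ j)"
  note D = dist_classD[OF F]
  have Xm: "(\<lambda>v. v $ j) \<in> borel_measurable F" for j using D(4) by (rule borel_measurable_integrable)
  have si: "integrable F (\<lambda>v. exp_payment (?P j) (v $ j))"
       "\<mu> $ j / rho (\<sigma> $ j / \<mu> $ j) \<le> (\<integral>v. exp_payment (?P j) (v $ j) \<partial>F)" for j
    using single_item[OF D(1) Xm D(4) D(5) D(6) dist_classD2[OF F], of j] mu_pos sigma_nonneg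
    by (simp_all add: D(6))
  have "(\<Sum>j\<in>UNIV. \<mu> $ j) / rho R = (\<Sum>j\<in>UNIV. \<mu> $ j / rho R)" by (simp add: sum_divide_distrib)
  also have "\<dots> \<le> (\<Sum>j\<in>UNIV. \<mu> $ j / rho (\<sigma> $ j / \<mu> $ j))"
  proof (intro sum_mono divide_left_mono)
    fix j
    show "rho (\<sigma> $ j / \<mu> $ j) \<le> rho R"
      using R mu_pos sigma_nonneg by (intro rho_mono) (auto intro: divide_nonneg_pos)
    show "0 \<le> \<mu> $ j" using mu_pos by (auto intro: less_imp_le)
    show "0 < rho R * rho (\<sigma> $ j / \<mu> $ j)" using rho_ge1[of R] rho_ge1[of "\<sigma> $ j / \<mu> $ j"] by simp
  qed
  also have "\<dots> \<le> (\<Sum>j\<in>UNIV. \<integral>v. exp_payment (?P j) (v $ j) \<partial>F)"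
    by (intro sum_mono si)
  also have "\<dots> = (\<integral>v. (\<Sum>j\<in>UNIV. exp_payment (?P j) (v $ j)) \<partial>F)"
    using si(1) by (subst Bochner_Integration.integral_sum) auto
  finally have "ennreal ((\<Sum>j\<in>UNIV. \<mu> $ j) / rho R) \<le> ennreal (\<integral>v. (\<Sum>j\<in>UNIV. exp_payment (?P j) (v $ j)) \<partial>F)"
    by (rule ennreal_leI)
  also have "\<dots> = (\<integral>\<^sup>+ v. ennreal (\<Sum>j\<in>UNIV. exp_payment (?P j) (v $ j)) \<partial>F)"
    using si(1) pay_nonneg[OF gK] by (intro nn_integral_eq_integral[symmetric]) (auto intro!: sum_nonneg)
  also have "\<dots> = REV (separate_loglottery \<mu> \<sigma>) F"
    by (simp add: REV_def separate_loglottery_def)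
  finally show ?thesis .
qed

lemma REV_bundle:
  fixes \<mu> \<sigma> :: "real ^ 'm::finite"
  assumes mu_pos: "\<forall>j. 0 < \<mu> $ j" and sigma_nonneg: "\<forall>j. 0 \<le> \<sigma> $ j"
    and F: "F \<in> dist_class \<mu> \<sigma>"
    and ind: "prob_space.indep_vars F (\<lambda>_. borel) (\<lambda>j v. v $ j) UNIV"
  defines "mb \<equiv> (\<Sum>j\<in>UNIV. \<mu> $ j)" and "sb \<equiv> sqrt (\<Sum>j\<in>UNIV. (\<sigma> $ j)\<^sup>2)"
  shows "ennreal (mb / rho (sb / mb)) \<le> REV (bundle_loglottery mb sb :: 'm mechanism) F"
proof -
  note D = dist_classD[OF F]
  interpret prob_space F by (rule D(1))
  define X where "X v = (\<Sum>j\<in>UNIV. v $ j)" for v :: "real ^ 'm"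
  have Xm: "X \<in> borel_measurable F" unfolding X_def using D(4) by (intro borel_measurable_sum borel_measurable_integrable) auto
  have iX: "integrable F X" unfolding X_def using D(4) by auto
  have EX: "expectation X = mb" unfolding X_def mb_def using D(4,6) by (subst Bochner_Integration.integral_sum) auto
  have mbpos: "0 < mb" unfolding mb_def using mu_pos by (intro sum_pos) auto
  have sbnn: "0 \<le> sb" unfolding sb_def by (simp add: sum_nonneg)
  define vr where "vr j = variance (\<lambda>v. v $ j)" for j
  have vr: "vr j \<le> (\<sigma> $ j)^2" "0 \<le> vr j" for j
    using var_le[OF D(1) dist_classD2[OF F, of j]] unfolding vr_def by auto
  have Eii: "expectation (\<lambda>v. (v $ i)^2) = (\<mu> $ i)^2 + vr i" for i
    using variance_eq[OF D(4) D(5), of i] D(6)[of i] unfolding vr_def by simp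
  have prod_ij: "integrable F (\<lambda>v. v $ i * v $ j) \<and> expectation (\<lambda>v. v $ i * v $ j) = \<mu> $ i * \<mu> $ j + (if i = j then vr i else 0)" for i j
  proof (cases "i = j")
    case True
    then show ?thesis using D(5)[of i] Eii[of i] by (simp add: power2_eq_square)
  next
    case False
    have indij: "indep_vars (\<lambda>_. borel) (\<lambda>j v. v $ j) {i, j}" using ind by (rule indep_vars_subset) auto
    have "integrable F (\<lambda>v. \<Prod>k\<in>{i,j}. v $ k)"
      using indij D(4) by (intro indep_vars_integrable) auto
    moreover have "expectation (\<lambda>v. \<Prod>k\<in>{i,j}. v $ k) = (\<Prod>k\<in>{i,j}. expectation (\<lambda>v. v $ k))"
      using indij D(4) by (intro indep_vars_lebesgue_integral) auto
    ultimately show ?thesis using False D(6) by simp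
  qed
  have X2: "(X v)^2 = (\<Sum>i\<in>UNIV. \<Sum>j\<in>UNIV. v $ i * v $ j)" for v
    unfolding X_def power2_eq_square by (rule sum_product)
  have iX2: "integrable F (\<lambda>v. (X v)^2)" unfolding X2 using prod_ij by auto
  have "expectation (\<lambda>v. (X v)^2) = (\<Sum>i\<in>UNIV. \<Sum>j\<in>UNIV. \<mu> $ i * \<mu> $ j + (if i = j then vr i else 0))"
    unfolding X2 using prod_ij by (simp add: Bochner_Integration.integral_sum)
  also have "\<dots> = mb^2 + (\<Sum>i\<in>UNIV. vr i)"
    unfolding mb_def by (simp add: sum.distrib power2_eq_square sum_product)
  finally have "variance X = (\<Sum>i\<in>UNIV. vr i)" using variance_eq[OF iX iX2] EX by simp
  also have "\<dots> \<le> (\<Sum>i\<in>UNIV. (\<sigma> $ i)^2)" using vr by (intro sum_mono) auto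
  finally have "sqrt (variance X) \<le> sb" unfolding sb_def by simp
  note si = single_item[OF D(1) Xm iX iX2 EX this mbpos sbnn]
  have "ennreal (mb / rho (sb / mb)) \<le> ennreal (\<integral>v. exp_payment (loglottery mb sb) (X v) \<partial>F)"
    by (rule ennreal_leI) (rule si(2))
  also have "\<dots> = (\<integral>\<^sup>+ v. ennreal (exp_payment (loglottery mb sb) (X v)) \<partial>F)"
    using si(1) pay_nonneg good_loglottery[OF mbpos sbnn] by (intro nn_integral_eq_integral[symmetric]) auto
  also have "\<dots> = REV (bundle_loglottery mb sb :: 'm mechanism) F"
    by (simp add: REV_def bundle_loglottery_def X_def)
  finally show ?thesis .
qed

theorem theorem4:
  fixes \<mu> \<sigma> :: "real ^ 'm"
  assumes mu_pos: "\<forall>j. 0 < \<mu> $ j"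
    and sigma_nonneg: "\<forall>j. 0 \<le> \<sigma> $ j"
  defines "r_max \<equiv> Max (range (\<lambda>j. \<sigma> $ j / \<mu> $ j))"
    and "mu_bar \<equiv> (\<Sum>j\<in>UNIV. \<mu> $ j)"
    and "sigma_bar \<equiv> sqrt (\<Sum>j\<in>UNIV. (\<sigma> $ j)\<^sup>2)"
  shows "(\<forall>F \<in> dist_class \<mu> \<sigma>.
            ratio (OPT F) (REV (separate_loglottery \<mu> \<sigma>) F) \<le> ennreal (rho r_max))
       \<and> APX \<mu> \<sigma> \<le> ennreal (rho r_max)
       \<and> (\<forall>F \<in> dist_class \<mu> \<sigma>.
            prob_space.indep_vars F (\<lambda>_. borel) (\<lambda>j v. v $ j) UNIV \<longrightarrow>
            ratio (OPT F) (REV (bundle_loglottery mu_bar sigma_bar :: 'm mechanism) F)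
              \<le> ennreal (rho (sigma_bar / mu_bar)))"
proof -
  have R: "\<forall>j. \<sigma> $ j / \<mu> $ j \<le> r_max" unfolding r_max_def by (auto intro: Max_ge)
  have mbpos: "0 < mu_bar" unfolding mu_bar_def using mu_pos by (intro sum_pos) auto
  have rpos: "0 < rho r" for r using rho_ge1[of r] by simp
  have P1: "\<forall>F \<in> dist_class \<mu> \<sigma>.
            ratio (OPT F) (REV (separate_loglottery \<mu> \<sigma>) F) \<le> ennreal (rho r_max)"
  proof
    fix F assume F: "F \<in> dist_class \<mu> \<sigma>"
    show "ratio (OPT F) (REV (separate_loglottery \<mu> \<sigma>) F) \<le> ennreal (rho r_max)"
      using ratio_le[OF OPT_le[OF F] REV_sep[OF mu_pos sigma_nonneg R F]] mbpos rpos
      unfolding mu_bar_def by blast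
  qed
  have P2: "APX \<mu> \<sigma> \<le> ennreal (rho r_max)"
    unfolding APX_def
    by (rule INF_lower2[of "separate_loglottery \<mu> \<sigma>"])
       (use admissible_sep[OF mu_pos sigma_nonneg] P1 in \<open>auto intro: SUP_least\<close>)
  have P3: "\<forall>F \<in> dist_class \<mu> \<sigma>.
            prob_space.indep_vars F (\<lambda>_. borel) (\<lambda>j v. v $ j) UNIV \<longrightarrow>
            ratio (OPT F) (REV (bundle_loglottery mu_bar sigma_bar :: 'm mechanism) F)
              \<le> ennreal (rho (sigma_bar / mu_bar))"
  proof (intro ballI impI)
    fix F assume F: "F \<in> dist_class \<mu> \<sigma>" and ind: "prob_space.indep_vars F (\<lambda>_. borel) (\<lambda>j v. v $ j) UNIV"
    show "ratio (OPT F) (REV (bundle_loglottery mu_bar sigma_bar :: 'm mechanism) F)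
              \<le> ennreal (rho (sigma_bar / mu_bar))"
      using ratio_le[OF OPT_le[OF F] REV_bundle[OF mu_pos sigma_nonneg F ind]] mbpos rpos
      unfolding mu_bar_def sigma_bar_def by blast
  qed
  from P1 P2 P3 show ?thesis by blast
qed

end
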